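(* Let $\mathbf Y_n=(\mathbf y_1,\dots,\mathbf y_n)=(y_{ij})_{n\times n}$ have i.i.d. $N(0,1)$ entries, and let $\boldsymbol\Gamma_n=(\boldsymbol\gamma_1,\dots,\boldsymbol\gamma_n)=(\gamma_{ij})$ be obtained by Gram–Schmidt: $\mathbf w_1=\mathbf y_1$, $\boldsymbol\gamma_1=\mathbf w_1/\|\mathbf w_1\|$, and $\mathbf w_k=\mathbf y_k-\sum_{i<k}\langle\mathbf y_k,\boldsymbol\gamma_i\rangle\boldsymbol\gamma_i$, $\boldsymbol\gamma_k=\mathbf w_k/\|\mathbf w_k\|$ for $2\le k\le n$. For $1\le p,q\le n$ let $\boldsymbol\Gamma_{p\times q}=(\gamma_{ij})_{i\le p,j\le q}$ and $\mathbf Y_{p\times q}=(y_{ij})_{i\le p,j\le q}$. Then for every $n\ge2$ and all $1\le p,q\le n$, $$\mathbb E\sum_{i=1}^p\sum_{j=1}^q(\sqrt n\gamma_{ij}-y_{ij})^2\le\frac{24pq^2}{n}.$$ *)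

theory Defs
  imports "HOL-Probability.Probability"
begin

text \<open>Vectors in R^n are functions nat => real, used on indices 1..n.
  An n x n matrix Y is a function Y i j (row i, column j), 1 <= i,j <= n.\<close>

definition inner_n :: "nat \<Rightarrow> (nat \<Rightarrow> real) \<Rightarrow> (nat \<Rightarrow> real) \<Rightarrow> real" where
  "inner_n n u v = (\<Sum>i=1..n. u i * v i)"

definition norm_n :: "nat \<Rightarrow> (nat \<Rightarrow> real) \<Rightarrow> real" where
  "norm_n n u = sqrt (inner_n n u u)"

definition col :: "(nat \<Rightarrow> nat \<Rightarrow> real) \<Rightarrow> nat \<Rightarrow> (nat \<Rightarrow> real)" where
  "col Y k = (\<lambda>i. Y i k)"

primrec gs_list :: "nat \<Rightarrow> (nat \<Rightarrow> nat \<Rightarrow> real) \<Rightarrow> nat \<Rightarrow> (nat \<Rightarrow> real) list" where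
  "gs_list n Y 0 = []"
| "gs_list n Y (Suc k) =
     (let G = gs_list n Y k;
          w = (\<lambda>i. Y i (Suc k) - (\<Sum>g\<leftarrow>G. inner_n n (col Y (Suc k)) g * g i))
      in G @ [(\<lambda>i. w i / norm_n n w)])"

definition gs_gamma :: "nat \<Rightarrow> (nat \<Rightarrow> nat \<Rightarrow> real) \<Rightarrow> nat \<Rightarrow> nat \<Rightarrow> real" where
  "gs_gamma n Y i j = (gs_list n Y j ! (j - 1)) i"

definition gauss_matrix_space :: "nat \<Rightarrow> ((nat \<times> nat) \<Rightarrow> real) measure" where
  "gauss_matrix_space n =
     (\<Pi>\<^sub>M ij\<in>{1..n} \<times> {1..n}. density lborel std_normal_density)"

end

theory Submission
  imports Defs "HOL-Probability.Probability"
begin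


definition gam :: "nat \<Rightarrow> (nat \<Rightarrow> nat \<Rightarrow> real) \<Rightarrow> nat \<Rightarrow> nat \<Rightarrow> real" where
  "gam n Y j = gs_list n Y j ! (j - 1)"

lemma length_gs_list[simp]: "length (gs_list n Y k) = k"
  by (induction k) (auto simp: Let_def)

lemma gs_list_map: "gs_list n Y k = map (gam n Y) [1..<Suc k]"
proof (induction k)
  case 0 then show ?case by simp
next
  case (Suc k)
  have "gam n Y (Suc k) = gs_list n Y (Suc k) ! k" by (simp add: gam_def)
  also have "\<dots> = last (gs_list n Y (Suc k))" by (simp add: Let_def nth_append)
  finally have g: "gs_list n Y (Suc k) = gs_list n Y k @ [gam n Y (Suc k)]"
    by (simp add: Let_def)
  show ?case using Suc by (simp only: g) (simp del: upt_Suc add: upt_Suc_append)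
qed

lemma gs_gamma_gam: "gs_gamma n Y i j = gam n Y j i"
  by (simp add: gs_gamma_def gam_def)

definition wvec :: "nat \<Rightarrow> (nat \<Rightarrow> nat \<Rightarrow> real) \<Rightarrow> nat \<Rightarrow> nat \<Rightarrow> real" where
  "wvec n Y k = (\<lambda>i. Y i (Suc k) - (\<Sum>l=1..k. inner_n n (col Y (Suc k)) (gam n Y l) * gam n Y l i))"

lemma gam_Suc: "gam n Y (Suc k) = (\<lambda>i. wvec n Y k i / norm_n n (wvec n Y k))"
proof -
  have "gam n Y (Suc k) = gs_list n Y (Suc k) ! k" by (simp add: gam_def)
  also have "\<dots> = (let G = gs_list n Y k;
          w = (\<lambda>i. Y i (Suc k) - (\<Sum>g\<leftarrow>G. inner_n n (col Y (Suc k)) g * g i))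
      in (\<lambda>i. w i / norm_n n w))" by (simp add: Let_def nth_append)
  also have "\<dots> = (\<lambda>i. wvec n Y k i / norm_n n (wvec n Y k))"
  proof -
    have "(\<Sum>g\<leftarrow>gs_list n Y k. inner_n n (col Y (Suc k)) g * g i)
       = (\<Sum>l=1..k. inner_n n (col Y (Suc k)) (gam n Y l) * gam n Y l i)" for i
      unfolding gs_list_map map_map
      by (simp del: upt_Suc add: sum_set_upt_conv_sum_list_nat[symmetric] atLeastLessThanSuc_atLeastAtMost o_def)
    then show ?thesis by (simp add: Let_def wvec_def)
  qed
  finally show ?thesis .
qed


lemma inner_n_commute: "inner_n n u v = inner_n n v u"
  unfolding inner_n_def by (simp add: mult.commute)

lemma inner_n_zero: "(\<forall>i\<in>{1..n}. g i = 0) \<Longrightarrow> inner_n n f g = 0"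
  unfolding inner_n_def by simp

lemma inner_n_lin: "inner_n n (\<lambda>i. a i - (\<Sum>m\<in>S. c m * g m i)) v
   = inner_n n a v - (\<Sum>m\<in>S. c m * inner_n n (g m) v)"
  unfolding inner_n_def
  by (simp add: left_diff_distrib sum_subtractf sum_distrib_left sum_distrib_right sum.swap[of _ S] mult.assoc)

lemma inner_n_div: "inner_n n (\<lambda>i. u i / r) v = inner_n n u v / r"
  unfolding inner_n_def by (simp add: sum_divide_distrib)

lemma inner_n_self_nonneg: "inner_n n u u \<ge> 0"
  unfolding inner_n_def by (simp add: sum_nonneg)

lemma inner_n_self_zero: "inner_n n u u = 0 \<Longrightarrow> \<forall>i\<in>{1..n}. u i = 0"
  unfolding inner_n_def by (subst (asm) sum_nonneg_eq_0_iff) auto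

definition okv :: "nat \<Rightarrow> (nat \<Rightarrow> real) \<Rightarrow> bool" where
  "okv n g \<longleftrightarrow> inner_n n g g = 1 \<or> (\<forall>i\<in>{1..n}. g i = 0)"

lemma okv_div: "okv n (\<lambda>i. w i / norm_n n w)"
proof (cases "norm_n n w = 0")
  case True then show ?thesis by (simp add: okv_def)
next
  case False
  have "inner_n n (\<lambda>i. w i / norm_n n w) (\<lambda>i. w i / norm_n n w) = inner_n n w w / (norm_n n w)^2"
    unfolding inner_n_def by (simp add: sum_divide_distrib power2_eq_square)
  also have "\<dots> = 1" using False inner_n_self_nonneg[of n w] unfolding norm_n_def by simp
  finally show ?thesis by (simp add: okv_def)
qed

lemma okv_proj: "okv n g \<Longrightarrow> inner_n n y g - inner_n n y g * inner_n n g g = 0"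
  unfolding okv_def using inner_n_zero[of n g y] by auto

lemma wvec_orth:
  assumes orth: "\<And>j l. 1 \<le> j \<Longrightarrow> j \<le> k \<Longrightarrow> 1 \<le> l \<Longrightarrow> l \<le> k \<Longrightarrow> j \<noteq> l \<Longrightarrow> inner_n n (gam n Y j) (gam n Y l) = 0"
    and ok: "\<And>j. 1 \<le> j \<Longrightarrow> j \<le> k \<Longrightarrow> okv n (gam n Y j)"
    and l: "1 \<le> l" "l \<le> k"
  shows "inner_n n (wvec n Y k) (gam n Y l) = 0"
proof -
  let ?c = "\<lambda>m. inner_n n (col Y (Suc k)) (gam n Y m)"
  have "inner_n n (wvec n Y k) (gam n Y l) = inner_n n (col Y (Suc k)) (gam n Y l)
     - (\<Sum>m\<in>{1..k}. ?c m * inner_n n (gam n Y m) (gam n Y l))"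
    unfolding wvec_def by (subst inner_n_lin) (simp add: col_def)
  also have "(\<Sum>m\<in>{1..k}. ?c m * inner_n n (gam n Y m) (gam n Y l)) = ?c l * inner_n n (gam n Y l) (gam n Y l)"
    using l by (subst sum.remove[of _ l]) (auto intro!: sum.neutral simp: orth)
  finally show ?thesis using okv_proj[OF ok[OF l]] by simp
qed

lemma gs_orth:
  "\<forall>j l. 1 \<le> j \<longrightarrow> j \<le> k \<longrightarrow> 1 \<le> l \<longrightarrow> l \<le> k \<longrightarrow>
     (j \<noteq> l \<longrightarrow> inner_n n (gam n Y j) (gam n Y l) = 0) \<and> okv n (gam n Y j)"
proof (induction k)
  case 0 then show ?case by simp
next
  case (Suc k)
  have orth: "\<And>j l. 1 \<le> j \<Longrightarrow> j \<le> k \<Longrightarrow> 1 \<le> l \<Longrightarrow> l \<le> k \<Longrightarrow> j \<noteq> l \<Longrightarrow> inner_n n (gam n Y j) (gam n Y l) = 0"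
    and ok: "\<And>j. 1 \<le> j \<Longrightarrow> j \<le> k \<Longrightarrow> okv n (gam n Y j)" using Suc by blast+
  have new: "inner_n n (gam n Y (Suc k)) (gam n Y l) = 0" if "1 \<le> l" "l \<le> k" for l
    unfolding gam_Suc inner_n_div using wvec_orth[OF orth ok that] by simp
  have newok: "okv n (gam n Y (Suc k))" unfolding gam_Suc by (rule okv_div)
  show ?case
  proof (intro allI impI conjI)
    fix j l assume a: "1 \<le> j" "j \<le> Suc k" "1 \<le> l" "l \<le> Suc k" "j \<noteq> l"
    show "inner_n n (gam n Y j) (gam n Y l) = 0"
    proof (cases "j = Suc k")
      case True then show ?thesis using a new by auto
    next
      case False
      show ?thesis
      proof (cases "l = Suc k")
        case True then show ?thesis using a False new[of j] inner_n_commute by auto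
      next
        case False2: False
        then show ?thesis using a False orth by auto
      qed
    qed
  next
    fix j l assume a: "1 \<le> j" "j \<le> Suc k" "1 \<le> l" "l \<le> Suc k"
    show "okv n (gam n Y j)" using a newok ok by (cases "j = Suc k") auto
  qed
qed


lemma num_bound:
  fixes n r S :: real
  assumes n: "n > 0" and r: "r \<ge> 0" and S: "S \<ge> 0"
  shows "(sqrt n - r)^2 + S \<le> 2 * (n - (r^2 + S))^2 / n + 3 * S"
proof -
  define s where "s = sqrt (r^2 + S)"
  have s0: "s \<ge> 0" and ss: "s^2 = r^2 + S" using r S by (auto simp: s_def)
  have "sqrt (r^2) \<le> s" unfolding s_def using S by (intro real_sqrt_le_mono) simp
  then have sr: "r \<le> s" using r by simp
  have q: "sqrt n ^ 2 = n" using n by simp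
  have h1: "(sqrt n - r)^2 \<le> 2 * (sqrt n - s)^2 + 2 * (s - r)^2"
  proof -
    have "0 \<le> ((sqrt n - s) - (s - r))^2" by simp
    then show ?thesis by (simp add: power2_eq_square algebra_simps)
  qed
  have h2: "(s - r)^2 \<le> S"
  proof -
    have "(s - r)^2 = s^2 - 2 * s * r + r^2" by (simp add: power2_diff)
    also have "\<dots> \<le> s^2 - r^2" using mult_right_mono[OF sr r] by (simp add: power2_eq_square)
    finally show ?thesis using ss by simp
  qed
  have h3: "(sqrt n - s)^2 \<le> (n - s^2)^2 / n"
  proof -
    have "n - s^2 = (sqrt n - s) * (sqrt n + s)" using q by (simp add: power2_eq_square algebra_simps)
    then have "(n - s^2)^2 = (sqrt n - s)^2 * (sqrt n + s)^2" by (simp add: power_mult_distrib)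
    moreover have "(sqrt n + s)^2 \<ge> n" using s0 q
      using power_mono[of "sqrt n" "sqrt n + s" 2] by simp
    ultimately have "(sqrt n - s)^2 * n \<le> (n - s^2)^2"
      by (metis mult_left_mono zero_le_power2)
    then show ?thesis using n by (simp add: pos_le_divide_eq)
  qed
  show ?thesis using h1 h2 h3 ss S by simp
qed


lemma inner_n_lin2: "inner_n n u (\<lambda>i. \<Sum>m\<in>S. c m * g m i) = (\<Sum>m\<in>S. c m * inner_n n u (g m))"
  unfolding inner_n_def
  by (simp add: sum_distrib_left sum.swap[of _ S] mult.assoc mult.left_commute)

lemma sq_expand: "(\<Sum>i=1..n. (a * w i - y i)^2) = a^2 * inner_n n w w - 2 * a * inner_n n w y + inner_n n y y"
  unfolding inner_n_def
  by (simp add: power2_diff sum.distrib sum_subtractf sum_distrib_left power_mult_distrib power2_eq_square algebra_simps)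

lemma det_bound:
  assumes n: "n \<ge> 1"
  shows "(\<Sum>i=1..n. (sqrt (real n) * gam n Y (Suc k) i - Y i (Suc k))^2)
     \<le> 2 * (real n - inner_n n (col Y (Suc k)) (col Y (Suc k)))^2 / real n
        + 3 * (\<Sum>l=1..k. (inner_n n (col Y (Suc k)) (gam n Y l))^2)"
proof -
  let ?y = "col Y (Suc k)"
  let ?c = "\<lambda>m. inner_n n ?y (gam n Y m)"
  define P where "P = (\<lambda>i. \<Sum>m\<in>{1..k}. ?c m * gam n Y m i)"
  define w where "w = wvec n Y k"
  define S where "S = (\<Sum>l=1..k. (?c l)^2)"
  have orth: "\<And>j l. 1 \<le> j \<Longrightarrow> j \<le> k \<Longrightarrow> 1 \<le> l \<Longrightarrow> l \<le> k \<Longrightarrow> j \<noteq> l \<Longrightarrow> inner_n n (gam n Y j) (gam n Y l) = 0"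
    and ok: "\<And>j. 1 \<le> j \<Longrightarrow> j \<le> k \<Longrightarrow> okv n (gam n Y j)" using gs_orth[of k n Y] by blast+
  have w_eq: "w = (\<lambda>i. ?y i - P i)" unfolding w_def wvec_def P_def col_def by simp
  have wg: "inner_n n w (gam n Y m) = 0" if "1 \<le> m" "m \<le> k" for m
    unfolding w_def using wvec_orth[OF orth ok that] by simp
  have wP: "inner_n n w P = 0" unfolding P_def inner_n_lin2 using wg by simp
  have cg: "?c m * inner_n n (gam n Y m) (gam n Y m) = ?c m" if "1 \<le> m" "m \<le> k" for m
    using okv_proj[OF ok[OF that], of ?y] by simp
  have PP: "inner_n n P P = S"
  proof -
    have "inner_n n P P = (\<Sum>m\<in>{1..k}. ?c m * inner_n n (gam n Y m) P)"
      unfolding P_def[of] by (subst (1) inner_n_commute) (simp add: inner_n_lin2 P_def)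
    also have "\<dots> = (\<Sum>m\<in>{1..k}. ?c m * ?c m)"
    proof (intro sum.cong refl)
      fix m assume m: "m \<in> {1..k}"
      have "inner_n n (gam n Y m) P = (\<Sum>l\<in>{1..k}. ?c l * inner_n n (gam n Y m) (gam n Y l))"
        unfolding P_def by (rule inner_n_lin2)
      also have "\<dots> = ?c m * inner_n n (gam n Y m) (gam n Y m)"
        using m by (subst sum.remove[of _ m]) (auto intro!: sum.neutral simp: orth)
      also have "\<dots> = ?c m" using cg m by simp
      finally show "?c m * inner_n n (gam n Y m) P = ?c m * ?c m" by simp
    qed
    finally show ?thesis by (simp add: S_def power2_eq_square)
  qed
  have y_eq: "?y = (\<lambda>i. w i + P i)" unfolding w_eq by simp
  have yy: "inner_n n ?y ?y = inner_n n w w + S"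
  proof -
    have "inner_n n ?y ?y = inner_n n w w + 2 * inner_n n w P + inner_n n P P"
      unfolding y_eq inner_n_def by (simp add: sum.distrib sum_distrib_left algebra_simps)
    then show ?thesis using wP PP by simp
  qed
  have wy: "inner_n n w ?y = inner_n n w w"
  proof -
    have "inner_n n w ?y = inner_n n w w + inner_n n w P"
      unfolding y_eq inner_n_def by (simp add: sum.distrib algebra_simps)
    then show ?thesis using wP by simp
  qed
  define r where "r = norm_n n w"
  have ww0: "0 \<le> inner_n n w w" by (rule inner_n_self_nonneg)
  have r0: "r \<ge> 0" unfolding r_def norm_n_def using ww0 by simp
  have rr: "r^2 = inner_n n w w" unfolding r_def norm_n_def using ww0 by (simp del: inner_n_def)
  have S0: "S \<ge> 0" unfolding S_def by (simp add: sum_nonneg)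
  have gj: "gam n Y (Suc k) = (\<lambda>i. w i / r)" unfolding gam_Suc w_def r_def by simp
  have yi: "\<And>i. Y i (Suc k) = ?y i" by (simp add: col_def)
  have main: "(\<Sum>i=1..n. (sqrt (real n) * gam n Y (Suc k) i - Y i (Suc k))^2) \<le> (sqrt n - r)^2 + S"
  proof (cases "r = 0")
    case True
    then have "(\<Sum>i=1..n. (sqrt (real n) * gam n Y (Suc k) i - Y i (Suc k))^2) = inner_n n ?y ?y"
      unfolding gj by (simp add: inner_n_def yi power2_eq_square)
    also have "\<dots> = S" using yy rr True by simp
    finally show ?thesis by simp
  next
    case False
    have "(\<Sum>i=1..n. (sqrt (real n) * gam n Y (Suc k) i - Y i (Suc k))^2)
        = (\<Sum>i=1..n. ((sqrt (real n) / r) * w i - ?y i)^2)" unfolding gj yi by simp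
    also have "\<dots> = (sqrt n / r)^2 * inner_n n w w - 2 * (sqrt n / r) * inner_n n w ?y + inner_n n ?y ?y"
      by (rule sq_expand)
    also have "\<dots> = (sqrt n - r)^2 + S"
      using False r0 unfolding wy yy rr[symmetric]
      by (simp add: power2_eq_square field_simps)
    finally show ?thesis by simp
  qed
  also have "\<dots> \<le> 2 * (real n - (r^2 + S))^2 / real n + 3 * S"
    using n r0 S0 by (intro num_bound) auto
  finally show ?thesis using yy rr by (simp add: S_def)
qed


lemma inner_n_perm:
  assumes "bij_betw \<pi> {1..n} {1..n}"
  shows "inner_n n (\<lambda>i. u (\<pi> i)) (\<lambda>i. v (\<pi> i)) = inner_n n u v"
  unfolding inner_n_def using sum.reindex_bij_betw[OF assms, of "\<lambda>i. u i * v i"] by simp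

lemma gam_perm:
  assumes \<pi>: "bij_betw \<pi> {1..n} {1..n}"
  shows "\<forall>l. 1 \<le> l \<longrightarrow> l \<le> k \<longrightarrow> gam n (\<lambda>a b. Y (\<pi> a) b) l = (\<lambda>a. gam n Y l (\<pi> a))"
proof (induction k)
  case 0 then show ?case by simp
next
  case (Suc k)
  let ?Y' = "\<lambda>a b. Y (\<pi> a) b"
  have IH: "\<And>l. 1 \<le> l \<Longrightarrow> l \<le> k \<Longrightarrow> gam n ?Y' l = (\<lambda>a. gam n Y l (\<pi> a))" using Suc by blast
  have colp: "col ?Y' (Suc k) = (\<lambda>a. col Y (Suc k) (\<pi> a))" by (simp add: col_def)
  have wp: "wvec n ?Y' k = (\<lambda>a. wvec n Y k (\<pi> a))"
  proof
    fix a
    show "wvec n ?Y' k a = wvec n Y k (\<pi> a)"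
      unfolding wvec_def colp
      by (intro arg_cong2[where f="(-)"] refl sum.cong) (auto simp: IH inner_n_perm[OF \<pi>])
  qed
  have "gam n ?Y' (Suc k) = (\<lambda>a. gam n Y (Suc k) (\<pi> a))"
    unfolding gam_Suc wp norm_n_def using inner_n_perm[OF \<pi>, of "wvec n Y k" "wvec n Y k"] by simp
  then show ?case using IH by (metis le_SucE)
qed

lemma inner_n_cong: "(\<And>i. i \<in> {1..n} \<Longrightarrow> u i = u' i) \<Longrightarrow> (\<And>i. i \<in> {1..n} \<Longrightarrow> v i = v' i) \<Longrightarrow>
   inner_n n u v = inner_n n u' v'"
  unfolding inner_n_def by (intro sum.cong) auto

lemma gam_local:
  assumes "\<And>a b. a \<in> {1..n} \<Longrightarrow> b \<in> {1..k} \<Longrightarrow> Y a b = Y' a b"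
  shows "\<forall>l. 1 \<le> l \<longrightarrow> l \<le> k \<longrightarrow> (\<forall>a\<in>{1..n}. gam n Y l a = gam n Y' l a)"
  using assms
proof (induction k)
  case 0 then show ?case by simp
next
  case (Suc k)
  have IH: "\<And>l a. 1 \<le> l \<Longrightarrow> l \<le> k \<Longrightarrow> a \<in> {1..n} \<Longrightarrow> gam n Y l a = gam n Y' l a"
    using Suc.IH Suc.prems by auto
  have wp: "wvec n Y k a = wvec n Y' k a" if a: "a \<in> {1..n}" for a
    unfolding wvec_def using a Suc.prems
    by (intro arg_cong2[where f="(-)"] sum.cong refl arg_cong2[where f="(*)"] inner_n_cong)
       (auto simp: IH col_def)
  have nw: "norm_n n (wvec n Y k) = norm_n n (wvec n Y' k)"
    unfolding norm_n_def by (intro arg_cong[where f=sqrt] inner_n_cong) (auto simp: wp)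
  have "\<forall>a\<in>{1..n}. gam n Y (Suc k) a = gam n Y' (Suc k) a"
    unfolding gam_Suc nw using wp by simp
  then show ?case using IH by (metis le_SucE)
qed


definition stdN :: "real measure" where "stdN = density lborel std_normal_density"

lemma prob_stdN: "prob_space stdN"
  unfolding stdN_def by (rule prob_space_normal_density) simp

lemma stdN_mom:
  shows "integrable stdN (\<lambda>x. x^k)"
    and "integral\<^sup>L stdN (\<lambda>x. x^k) = integral\<^sup>L lborel (\<lambda>x. std_normal_density x * x^k)"
proof -
  show "integrable stdN (\<lambda>x. x^k)" unfolding stdN_def
    by (subst integrable_density) (auto simp: normal_density_nonneg integrable_std_normal_moment)
  show "integral\<^sup>L stdN (\<lambda>x. x^k) = integral\<^sup>L lborel (\<lambda>x. std_normal_density x * x^k)" unfolding stdN_def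
    by (subst integral_density) (auto simp: normal_density_nonneg)
qed

lemma stdN_m1: "integral\<^sup>L stdN (\<lambda>x. x^1) = 0"
  using stdN_mom(2)[of 1] integral_std_normal_moment_odd[of 0] by simp
lemma stdN_m2: "integral\<^sup>L stdN (\<lambda>x. x^2) = 1"
  using stdN_mom(2)[of 2] integral_std_normal_moment_even[of 1] by simp
lemma stdN_m4: "integral\<^sup>L stdN (\<lambda>x. x^4) = 3"
  using stdN_mom(2)[of 4] integral_std_normal_moment_even[of 2] by (simp add: fact_numeral)

lemma stdN_const: "integrable stdN (\<lambda>x. 1::real)"
proof -
  interpret prob_space stdN by (rule prob_stdN)
  show ?thesis by simp
qed

interpretation PN: product_sigma_finite "\<lambda>_::'i. stdN"
  unfolding product_sigma_finite_def
  using prob_space_imp_sigma_finite[OF prob_stdN] by simp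

lemma pim_mom1:
  fixes J :: "'i set"
  assumes J: "finite J" "a \<in> J"
  shows "integrable (PiM J (\<lambda>_. stdN)) (\<lambda>x. x a ^ k)"
    and "integral\<^sup>L (PiM J (\<lambda>_. stdN)) (\<lambda>x. x a ^ k) = integral\<^sup>L stdN (\<lambda>x. x^k)"
proof -
  define f where "f = (\<lambda>i::'i. if i = a then (\<lambda>x::real. x^k) else (\<lambda>x. 1))"
  have fi: "\<And>i. i \<in> J \<Longrightarrow> integrable stdN (f i)"
    unfolding f_def using stdN_mom(1) stdN_const by auto
  have pe: "(\<Prod>i\<in>J. f i (x i)) = x a ^ k" for x
    using J by (subst prod.remove[of _ a]) (auto simp: f_def)
  show "integrable (PiM J (\<lambda>_. stdN)) (\<lambda>x. x a ^ k)"
    using PN.product_integrable_prod[of J f, OF J(1) fi] by (simp add: pe)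
  have "(\<Prod>i\<in>J. integral\<^sup>L stdN (f i)) = integral\<^sup>L stdN (\<lambda>x. x^k)"
    using J by (subst prod.remove[of _ a]) (auto simp: f_def prob_space.prob_space[OF prob_stdN])
  then show "integral\<^sup>L (PiM J (\<lambda>_. stdN)) (\<lambda>x. x a ^ k) = integral\<^sup>L stdN (\<lambda>x. x^k)"
    using PN.product_integral_prod[of J f, OF J(1) fi] by (simp add: pe)
qed

lemma pim_mom2:
  fixes J :: "'i set"
  assumes J: "finite J" "a \<in> J" "b \<in> J" "a \<noteq> b"
  shows "integrable (PiM J (\<lambda>_. stdN)) (\<lambda>x. x a ^ k1 * x b ^ k2)"
    and "integral\<^sup>L (PiM J (\<lambda>_. stdN)) (\<lambda>x. x a ^ k1 * x b ^ k2) = integral\<^sup>L stdN (\<lambda>x. x^k1) * integral\<^sup>L stdN (\<lambda>x. x^k2)"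
proof -
  define f where "f = (\<lambda>i::'i. if i = a then (\<lambda>x::real. x^k1) else if i = b then (\<lambda>x. x^k2) else (\<lambda>x. 1))"
  have fi: "\<And>i. i \<in> J \<Longrightarrow> integrable stdN (f i)"
    unfolding f_def using stdN_mom(1) stdN_const by auto
  have pe: "(\<Prod>i\<in>J. f i (x i)) = x a ^ k1 * x b ^ k2" for x
    using J by (subst prod.remove[of _ a], simp, simp, subst prod.remove[of _ b]) (auto simp: f_def)
  show "integrable (PiM J (\<lambda>_. stdN)) (\<lambda>x. x a ^ k1 * x b ^ k2)"
    using PN.product_integrable_prod[of J f, OF J(1) fi] by (simp add: pe)
  have "(\<Prod>i\<in>J. integral\<^sup>L stdN (f i)) = integral\<^sup>L stdN (\<lambda>x. x^k1) * integral\<^sup>L stdN (\<lambda>x. x^k2)"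
    using J by (subst prod.remove[of _ a], simp, simp, subst prod.remove[of _ b])
        (auto simp: f_def prob_space.prob_space[OF prob_stdN])
  then show "integral\<^sup>L (PiM J (\<lambda>_. stdN)) (\<lambda>x. x a ^ k1 * x b ^ k2) = integral\<^sup>L stdN (\<lambda>x. x^k1) * integral\<^sup>L stdN (\<lambda>x. x^k2)"
    using PN.product_integral_prod[of J f, OF J(1) fi] by (simp add: pe)
qed

lemma E_xx:
  fixes J :: "'i set"
  assumes J: "finite J" "a \<in> J" "b \<in> J"
  shows "integrable (PiM J (\<lambda>_. stdN)) (\<lambda>x. x a * x b)"
    and "integral\<^sup>L (PiM J (\<lambda>_. stdN)) (\<lambda>x. x a * x b) = (if a = b then 1 else 0)"
proof -
  have "integrable (PiM J (\<lambda>_. stdN)) (\<lambda>x. x a * x b) \<and>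
      integral\<^sup>L (PiM J (\<lambda>_. stdN)) (\<lambda>x. x a * x b) = (if a = b then 1 else 0)"
  proof (cases "a = b")
    case True
    have e: "(\<lambda>x::'i\<Rightarrow>real. x a * x b) = (\<lambda>x. x a ^ 2)" using True by (simp add: power2_eq_square)
    show ?thesis unfolding e using pim_mom1[OF J(1,2), of 2] stdN_m2 True by simp
  next
    case False
    show ?thesis using pim_mom2[OF J False, of 1 1] stdN_m1 False by simp
  qed
  then show "integrable (PiM J (\<lambda>_. stdN)) (\<lambda>x. x a * x b)"
    and "integral\<^sup>L (PiM J (\<lambda>_. stdN)) (\<lambda>x. x a * x b) = (if a = b then 1 else 0)" by auto
qed

lemma E_x2x2:
  fixes J :: "'i set"
  assumes J: "finite J" "a \<in> J" "b \<in> J"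
  shows "integrable (PiM J (\<lambda>_. stdN)) (\<lambda>x. x a ^ 2 * x b ^ 2)"
    and "integral\<^sup>L (PiM J (\<lambda>_. stdN)) (\<lambda>x. x a ^ 2 * x b ^ 2) = (if a = b then 3 else 1)"
proof -
  have "integrable (PiM J (\<lambda>_. stdN)) (\<lambda>x. x a ^ 2 * x b ^ 2) \<and>
      integral\<^sup>L (PiM J (\<lambda>_. stdN)) (\<lambda>x. x a ^ 2 * x b ^ 2) = (if a = b then 3 else 1)"
  proof (cases "a = b")
    case True
    have e: "(\<lambda>x::'i\<Rightarrow>real. x a ^ 2 * x b ^ 2) = (\<lambda>x. x a ^ 4)" using True
      by (simp add: power2_eq_square eval_nat_numeral mult.assoc)
    show ?thesis unfolding e using pim_mom1[OF J(1,2), of 4] stdN_m4 True by simp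
  next
    case False
    show ?thesis using pim_mom2[OF J False, of 2 2] stdN_m2 False by simp
  qed
  then show "integrable (PiM J (\<lambda>_. stdN)) (\<lambda>x. x a ^ 2 * x b ^ 2)"
    and "integral\<^sup>L (PiM J (\<lambda>_. stdN)) (\<lambda>x. x a ^ 2 * x b ^ 2) = (if a = b then 3 else 1)" by auto
qed


lemma G1:
  fixes J :: "'i set"
  assumes J: "finite J"
  shows "(\<integral>\<^sup>+ x. ennreal ((\<Sum>a\<in>J. c a * x a)^2) \<partial>PiM J (\<lambda>_. stdN)) = ennreal (\<Sum>a\<in>J. (c a)^2)"
proof -
  let ?M = "PiM J (\<lambda>_. stdN)"
  have eq: "(\<lambda>x. (\<Sum>a\<in>J. c a * x a)^2) = (\<lambda>x. \<Sum>a\<in>J. \<Sum>b\<in>J. c a * c b * (x a * x b))"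
    by (simp add: power2_eq_square sum_product algebra_simps)
  have int: "integrable ?M (\<lambda>x. \<Sum>a\<in>J. \<Sum>b\<in>J. c a * c b * (x a * x b))"
    by (auto intro!: integrable_sum integrable_mult_right E_xx(1)[OF J])
  have "integral\<^sup>L ?M (\<lambda>x. \<Sum>a\<in>J. \<Sum>b\<in>J. c a * c b * (x a * x b))
      = (\<Sum>a\<in>J. \<Sum>b\<in>J. c a * c b * (if a = b then 1 else 0))"
    using E_xx[OF J] by (simp add: integral_sum integrable_sum)
  also have "\<dots> = (\<Sum>a\<in>J. (c a)^2)"
    using J by (simp add: power2_eq_square if_distrib cong: if_cong)
  finally have ie: "integral\<^sup>L ?M (\<lambda>x. \<Sum>a\<in>J. \<Sum>b\<in>J. c a * c b * (x a * x b)) = (\<Sum>a\<in>J. (c a)^2)" .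
  have eqp: "\<And>x. (\<Sum>a\<in>J. c a * x a)^2 = (\<Sum>a\<in>J. \<Sum>b\<in>J. c a * c b * (x a * x b))"
    using eq by metis
  have "(\<integral>\<^sup>+ x. ennreal ((\<Sum>a\<in>J. c a * x a)^2) \<partial>?M) = (\<integral>\<^sup>+ x. ennreal (\<Sum>a\<in>J. \<Sum>b\<in>J. c a * c b * (x a * x b)) \<partial>?M)"
    by (simp only: eqp)
  also have "\<dots> = ennreal (integral\<^sup>L ?M (\<lambda>x. \<Sum>a\<in>J. \<Sum>b\<in>J. c a * c b * (x a * x b)))"
    by (rule nn_integral_eq_integral[OF int]) (simp add: eqp[symmetric])
  finally show ?thesis using ie by simp
qed

lemma G2:
  fixes J :: "'i set"
  assumes J: "finite J"
  shows "(\<integral>\<^sup>+ x. ennreal ((real (card J) - (\<Sum>a\<in>J. x a * x a))^2) \<partial>PiM J (\<lambda>_. stdN)) = ennreal (2 * real (card J))"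
proof -
  let ?M = "PiM J (\<lambda>_. stdN)"
  let ?m = "real (card J)"
  have eq: "(\<lambda>x. (?m - (\<Sum>a\<in>J. x a * x a))^2) = (\<lambda>x. ?m^2 - (\<Sum>a\<in>J. (2 * ?m) * (x a * x a))
       + (\<Sum>a\<in>J. \<Sum>b\<in>J. x a ^ 2 * x b ^ 2))"
    by (simp add: power2_diff sum_product power2_eq_square sum_distrib_left algebra_simps)
  interpret prob_space ?M by (intro prob_space_PiM prob_stdN)
  have i1: "integrable ?M (\<lambda>x. \<Sum>a\<in>J. (2 * ?m) * (x a * x a))"
    by (auto intro!: integrable_sum integrable_mult_right E_xx(1)[OF J])
  have i2: "integrable ?M (\<lambda>x. \<Sum>a\<in>J. \<Sum>b\<in>J. x a ^ 2 * x b ^ 2)"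
    by (auto intro!: integrable_sum E_x2x2(1)[OF J])
  have int: "integrable ?M (\<lambda>x. ?m^2 - (\<Sum>a\<in>J. (2 * ?m) * (x a * x a)) + (\<Sum>a\<in>J. \<Sum>b\<in>J. x a ^ 2 * x b ^ 2))"
    using i1 i2 by auto
  have v1: "integral\<^sup>L ?M (\<lambda>x. \<Sum>a\<in>J. (2 * ?m) * (x a * x a)) = 2 * ?m * ?m"
    using E_xx[OF J] by (simp add: integral_sum)
  have v2: "integral\<^sup>L ?M (\<lambda>x. \<Sum>a\<in>J. \<Sum>b\<in>J. x a ^ 2 * x b ^ 2) = ?m * (?m + 2)"
  proof -
    have "integral\<^sup>L ?M (\<lambda>x. \<Sum>a\<in>J. \<Sum>b\<in>J. x a ^ 2 * x b ^ 2) = (\<Sum>a\<in>J. \<Sum>b\<in>J. (if a = b then 3 else 1::real))"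
      using E_x2x2[OF J] by (simp add: integral_sum integrable_sum)
    also have "\<dots> = (\<Sum>a\<in>J. \<Sum>b\<in>J. (1 + (if a = b then 2 else 0::real)))"
      by (intro sum.cong) auto
    also have "\<dots> = ?m * (?m + 2)"
      using J by (simp add: sum.distrib algebra_simps)
    finally show ?thesis .
  qed
  have ie: "integral\<^sup>L ?M (\<lambda>x. ?m^2 - (\<Sum>a\<in>J. (2 * ?m) * (x a * x a)) + (\<Sum>a\<in>J. \<Sum>b\<in>J. x a ^ 2 * x b ^ 2)) = 2 * ?m"
    using i1 i2 v1 v2 by (simp add: power2_eq_square algebra_simps prob_space)
  have eqp: "\<And>x. (?m - (\<Sum>a\<in>J. x a * x a))^2 = ?m^2 - (\<Sum>a\<in>J. (2 * ?m) * (x a * x a))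
       + (\<Sum>a\<in>J. \<Sum>b\<in>J. x a ^ 2 * x b ^ 2)"
    using eq by metis
  have "(\<integral>\<^sup>+ x. ennreal ((?m - (\<Sum>a\<in>J. x a * x a))^2) \<partial>?M) = (\<integral>\<^sup>+ x. ennreal (?m^2 - (\<Sum>a\<in>J. (2 * ?m) * (x a * x a))
       + (\<Sum>a\<in>J. \<Sum>b\<in>J. x a ^ 2 * x b ^ 2)) \<partial>?M)"
    by (simp only: eqp)
  also have "\<dots> = ennreal (integral\<^sup>L ?M (\<lambda>x. ?m^2 - (\<Sum>a\<in>J. (2 * ?m) * (x a * x a))
       + (\<Sum>a\<in>J. \<Sum>b\<in>J. x a ^ 2 * x b ^ 2)))"
    by (rule nn_integral_eq_integral[OF int]) (simp add: eqp[symmetric])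
  finally show ?thesis using ie by simp
qed


abbreviation MM :: "nat \<Rightarrow> ((nat \<times> nat) \<Rightarrow> real) measure" where
  "MM n \<equiv> PiM ({1..n} \<times> {1..n}) (\<lambda>_. stdN)"

lemma gms: "gauss_matrix_space n = MM n"
  by (simp add: gauss_matrix_space_def stdN_def)

definition matw :: "((nat \<times> nat) \<Rightarrow> real) \<Rightarrow> nat \<Rightarrow> nat \<Rightarrow> real" where
  "matw \<omega> = (\<lambda>a b. \<omega> (a, b))"

lemma meas_comp: "(\<lambda>\<omega>. \<omega> x) \<in> borel_measurable (PiM I (\<lambda>_. stdN))"
proof (cases "x \<in> I")
  case True then show ?thesis by (simp add: stdN_def)
next
  case False
  have "(\<lambda>\<omega>::_\<Rightarrow>real. undefined::real) \<in> borel_measurable (PiM I (\<lambda>_. stdN))" by simp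
  then show ?thesis
    by (rule measurable_cong[THEN iffD1, rotated]) (use False in \<open>auto simp: space_PiM PiE_def extensional_def\<close>)
qed

lemma meas_gam: "\<forall>l. 1 \<le> l \<longrightarrow> l \<le> k \<longrightarrow> (\<forall>a. (\<lambda>\<omega>. gam n (matw \<omega>) l a) \<in> borel_measurable (PiM I (\<lambda>_. stdN)))"
proof (induction k)
  case 0 then show ?case by simp
next
  case (Suc k)
  have IH: "\<And>l a. 1 \<le> l \<Longrightarrow> l \<le> k \<Longrightarrow> (\<lambda>\<omega>. gam n (matw \<omega>) l a) \<in> borel_measurable (PiM I (\<lambda>_. stdN))"
    using Suc by blast
  have w: "(\<lambda>\<omega>. wvec n (matw \<omega>) k a) \<in> borel_measurable (PiM I (\<lambda>_. stdN))" for a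
    unfolding wvec_def inner_n_def col_def matw_def
    by (intro borel_measurable_diff borel_measurable_sum borel_measurable_times meas_comp
        IH[unfolded matw_def]) auto
  have nw: "(\<lambda>\<omega>. norm_n n (wvec n (matw \<omega>) k)) \<in> borel_measurable (PiM I (\<lambda>_. stdN))"
    unfolding norm_n_def inner_n_def
    by (intro borel_measurable_sqrt[THEN measurable_compose[rotated]] borel_measurable_sum borel_measurable_times w)
  have "(\<lambda>\<omega>. gam n (matw \<omega>) (Suc k) a) \<in> borel_measurable (PiM I (\<lambda>_. stdN))" for a
    unfolding gam_Suc by (intro borel_measurable_divide w nw)
  then show ?case using IH by (metis le_SucE)
qed


definition fij :: "nat \<Rightarrow> nat \<Rightarrow> nat \<Rightarrow> ((nat \<times> nat) \<Rightarrow> real) \<Rightarrow> real" where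
  "fij n i j \<omega> = (sqrt (real n) * gam n (matw \<omega>) j i - \<omega> (i, j))^2"

lemma meas_fij: "1 \<le> j \<Longrightarrow> fij n i j \<in> borel_measurable (PiM I (\<lambda>_. stdN))"
  unfolding fij_def using meas_gam[of j n I]
  by (intro borel_measurable_power borel_measurable_diff borel_measurable_times meas_comp) auto

lemma meas_fij_e: "1 \<le> j \<Longrightarrow> (\<lambda>\<omega>. ennreal (fij n i j \<omega>)) \<in> borel_measurable (PiM I (\<lambda>_. stdN))"
  by (rule measurable_compose[OF meas_fij measurable_ennreal])

lemma sym_fij:
  assumes i: "i \<in> {1..n}" and j: "j \<in> {1..n}"
  shows "(\<integral>\<^sup>+ \<omega>. ennreal (fij n i j \<omega>) \<partial>MM n) = (\<integral>\<^sup>+ \<omega>. ennreal (fij n 1 j \<omega>) \<partial>MM n)"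
proof -
  let ?I = "{1..n} \<times> {1..n}"
  define sw where "sw = (\<lambda>a::nat. if a = i then 1 else if a = 1 then i else a)"
  define \<sigma> where "\<sigma> = (\<lambda>(a::nat, b::nat). (sw a, b))"
  define T where "T = (\<lambda>\<omega>::(nat\<times>nat)\<Rightarrow>real. \<lambda>x\<in>?I. \<omega> (\<sigma> x))"
  have n1: "1 \<le> n" using i by auto
  have swI: "sw a \<in> {1..n} \<longleftrightarrow> a \<in> {1..n}" for a using i n1 by (auto simp: sw_def)
  have swsw: "sw (sw a) = a" for a by (auto simp: sw_def)
  have swI': "sw a \<in> {1..n}" if "a \<in> {1..n}" for a using swI that by blast
  have bij: "bij_betw sw {1..n} {1..n}"
    by (rule bij_betwI[where g=sw]) (use swI swsw in \<open>auto simp del: atLeastAtMost_iff\<close>)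
  have inj: "inj_on \<sigma> ?I" unfolding \<sigma>_def inj_on_def by (clarsimp) (metis swsw)
  have \<sigma>I: "\<sigma> \<in> ?I \<rightarrow> ?I"
  proof
    fix x assume "x \<in> ?I"
    then obtain a b where x: "x = (a,b)" "a \<in> {1..n}" "b \<in> {1..n}" by auto
    then show "\<sigma> x \<in> ?I" using swI'[OF x(2)] by (simp add: \<sigma>_def)
  qed
  have dist: "distr (MM n) (MM n) T = MM n"
    using distr_PiM_reindex[of ?I "\<lambda>_. stdN" \<sigma> ?I, OF prob_stdN inj \<sigma>I] unfolding T_def by simp
  have Tm: "T \<in> measurable (MM n) (MM n)"
    unfolding T_def by (intro measurable_restrict measurable_component_singleton) (use \<sigma>I in auto)
  have key: "fij n 1 j (T \<omega>) = fij n i j \<omega>" if \<omega>: "\<omega> \<in> space (MM n)" for \<omega>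
  proof -
    have extw: "\<omega> x = undefined" if "x \<notin> ?I" for x by (rule PiE_arb[OF \<omega>[unfolded space_PiM] that])
    have mT: "matw (T \<omega>) = (\<lambda>a b. matw \<omega> (sw a) b)"
    proof (intro ext)
      fix a b
      show "matw (T \<omega>) a b = matw \<omega> (sw a) b"
        unfolding matw_def T_def \<sigma>_def using swI[of a] extw[of "(sw a, b)"] by (auto simp del: atLeastAtMost_iff)
    qed
    have g: "gam n (matw (T \<omega>)) j 1 = gam n (matw \<omega>) j i"
      unfolding mT using gam_perm[OF bij, of j "matw \<omega>"] j by (simp add: sw_def)
    have t: "T \<omega> (1, j) = \<omega> (i, j)" unfolding T_def \<sigma>_def using j n1 by (simp add: sw_def)
    show ?thesis unfolding fij_def g t ..
  qed
  have "(\<integral>\<^sup>+ \<omega>. ennreal (fij n 1 j \<omega>) \<partial>MM n) = (\<integral>\<^sup>+ \<omega>. ennreal (fij n 1 j \<omega>) \<partial>distr (MM n) (MM n) T)"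
    by (simp only: dist)
  also have "\<dots> = (\<integral>\<^sup>+ \<omega>. ennreal (fij n 1 j (T \<omega>)) \<partial>MM n)"
    by (rule nn_integral_distr[OF Tm]) (use j in \<open>simp add: meas_fij_e\<close>)
  also have "\<dots> = (\<integral>\<^sup>+ \<omega>. ennreal (fij n i j \<omega>) \<partial>MM n)"
    using key by (intro nn_integral_cong) auto
  finally show ?thesis ..
qed


lemma sumC: "(\<Sum>p\<in>{1..n}\<times>{j}. g p) = (\<Sum>a=1..n. g (a, j))"
proof -
  have e: "{1..n}\<times>{j} = (\<lambda>a. (a, j)) ` {1..n}" by auto
  show ?thesis unfolding e by (subst sum.reindex) (auto simp: inj_on_def)
qed

lemma cardC: "card ({1..n}\<times>{j}) = n"
  by (simp add: card_cartesian_product)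

lemma meas_inner_cc: "(\<lambda>\<omega>. ennreal ((real n - inner_n n (col (matw \<omega>) j) (col (matw \<omega>) j))^2)) \<in> borel_measurable (PiM I (\<lambda>_. stdN))"
  unfolding inner_n_def col_def matw_def
  by (intro measurable_compose[OF _ measurable_ennreal] borel_measurable_power borel_measurable_diff
      borel_measurable_const borel_measurable_sum borel_measurable_times meas_comp)

lemma meas_inner_cg: "1 \<le> k \<Longrightarrow> (\<lambda>\<omega>. ennreal ((inner_n n (col (matw \<omega>) j) (gam n (matw \<omega>) k))^2)) \<in> borel_measurable (PiM I (\<lambda>_. stdN))"
  unfolding inner_n_def col_def
  using meas_gam[of k n I]
  by (intro measurable_compose[OF _ measurable_ennreal] borel_measurable_power
      borel_measurable_sum borel_measurable_times meas_comp[unfolded matw_def]) (auto simp: matw_def meas_comp)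

context
  fixes n j :: nat
  assumes j: "1 \<le> j" "j \<le> n"
begin

definition "CC = {1..n} \<times> {j}"
definition "RR = {1..n} \<times> {1..n} - CC"

lemma RC: "RR \<inter> CC = {}" "RR \<union> CC = {1..n} \<times> {1..n}" "finite RR" "finite CC"
  using j by (auto simp: RR_def CC_def)

lemma fold:
  assumes f: "f \<in> borel_measurable (MM n)"
  shows "integral\<^sup>N (MM n) f = (\<integral>\<^sup>+ x. (\<integral>\<^sup>+ y. f (merge RR CC (x, y)) \<partial>PiM CC (\<lambda>_. stdN)) \<partial>PiM RR (\<lambda>_. stdN))"
  using PN.product_nn_integral_fold[OF RC(1,3,4), unfolded RC(2), OF f] .

lemma I2: "(\<integral>\<^sup>+ \<omega>. ennreal ((real n - inner_n n (col (matw \<omega>) j) (col (matw \<omega>) j))^2) \<partial>MM n) = ennreal (2 * real n)"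
proof -
  have inner: "(\<integral>\<^sup>+ y. ennreal ((real n - inner_n n (col (matw (merge RR CC (x, y))) j) (col (matw (merge RR CC (x, y))) j))^2) \<partial>PiM CC (\<lambda>_. stdN))
      = ennreal (2 * real n)" for x
  proof -
    have "inner_n n (col (matw (merge RR CC (x, y))) j) (col (matw (merge RR CC (x, y))) j) = (\<Sum>p\<in>CC. y p * y p)" for y
      unfolding inner_n_def col_def matw_def CC_def sumC using RC(1)
      by (intro sum.cong refl) (auto simp: CC_def)
    then have "(\<integral>\<^sup>+ y. ennreal ((real n - inner_n n (col (matw (merge RR CC (x, y))) j) (col (matw (merge RR CC (x, y))) j))^2) \<partial>PiM CC (\<lambda>_. stdN))
       = (\<integral>\<^sup>+ y. ennreal ((real (card CC) - (\<Sum>p\<in>CC. y p * y p))^2) \<partial>PiM CC (\<lambda>_. stdN))"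
      by (simp add: CC_def cardC)
    also have "\<dots> = ennreal (2 * real (card CC))" by (rule G2[OF RC(4)])
    finally show ?thesis by (simp add: CC_def cardC)
  qed
  interpret R: prob_space "PiM RR (\<lambda>_. stdN)" by (intro prob_space_PiM prob_stdN)
  show ?thesis
    by (subst fold[OF meas_inner_cc]) (simp add: inner R.emeasure_space_1)
qed

lemma I1:
  assumes k: "1 \<le> k" "k < j"
  shows "(\<integral>\<^sup>+ \<omega>. ennreal ((inner_n n (col (matw \<omega>) j) (gam n (matw \<omega>) k))^2) \<partial>MM n) \<le> 1"
proof -
  have inner: "(\<integral>\<^sup>+ y. ennreal ((inner_n n (col (matw (merge RR CC (x, y))) j) (gam n (matw (merge RR CC (x, y))) k))^2) \<partial>PiM CC (\<lambda>_. stdN))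
      = ennreal (inner_n n (gam n (matw x) k) (gam n (matw x) k))" for x
  proof -
    define g where "g = gam n (matw x) k"
    have loc: "gam n (matw (merge RR CC (x, y))) k a = g a" if "a \<in> {1..n}" for a y
    proof -
      have "matw (merge RR CC (x, y)) a b = matw x a b" if "a \<in> {1..n}" "b \<in> {1..k}" for a b
        using that k j RC(1) by (auto simp: matw_def RR_def CC_def)
      then show ?thesis using gam_local[of n k "matw (merge RR CC (x, y))" "matw x"] k that
        unfolding g_def by blast
    qed
    have my: "matw (merge RR CC (x, y)) a j = y (a, j)" if "a \<in> {1..n}" for a y
      using that RC(1) by (simp add: matw_def CC_def)
    have "inner_n n (col (matw (merge RR CC (x, y))) j) (gam n (matw (merge RR CC (x, y))) k) = (\<Sum>p\<in>CC. g (fst p) * y p)" for y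
    proof -
      have "inner_n n (col (matw (merge RR CC (x, y))) j) (gam n (matw (merge RR CC (x, y))) k) = (\<Sum>a=1..n. g a * y (a, j))"
        unfolding inner_n_def col_def by (intro sum.cong refl) (simp add: my loc del: atLeastAtMost_iff)
      then show ?thesis unfolding CC_def sumC by simp
    qed
    then have "(\<integral>\<^sup>+ y. ennreal ((inner_n n (col (matw (merge RR CC (x, y))) j) (gam n (matw (merge RR CC (x, y))) k))^2) \<partial>PiM CC (\<lambda>_. stdN))
       = (\<integral>\<^sup>+ y. ennreal ((\<Sum>p\<in>CC. g (fst p) * y p)^2) \<partial>PiM CC (\<lambda>_. stdN))"
      by simp
    also have "\<dots> = ennreal (\<Sum>p\<in>CC. (g (fst p))^2)" by (rule G1[OF RC(4)])
    also have "(\<Sum>p\<in>CC. (g (fst p))^2) = inner_n n g g"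
      unfolding CC_def sumC inner_n_def by (simp add: power2_eq_square)
    finally show ?thesis by (simp add: g_def)
  qed
  have le1: "inner_n n (gam n (matw x) k) (gam n (matw x) k) \<le> 1" for x
  proof -
    have "okv n (gam n (matw x) k)" using gs_orth[of k n "matw x"] k by auto
    then show ?thesis using inner_n_zero[of n "gam n (matw x) k" "gam n (matw x) k"]
      unfolding okv_def by auto
  qed
  interpret R: prob_space "PiM RR (\<lambda>_. stdN)" by (intro prob_space_PiM prob_stdN)
  have "(\<integral>\<^sup>+ \<omega>. ennreal ((inner_n n (col (matw \<omega>) j) (gam n (matw \<omega>) k))^2) \<partial>MM n)
      = (\<integral>\<^sup>+ x. ennreal (inner_n n (gam n (matw x) k) (gam n (matw x) k)) \<partial>PiM RR (\<lambda>_. stdN))"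
    by (subst fold[OF meas_inner_cg[OF k(1)]]) (simp add: inner)
  also have "\<dots> \<le> (\<integral>\<^sup>+ x. 1 \<partial>PiM RR (\<lambda>_. stdN))"
    by (intro nn_integral_mono) (simp add: le1)
  also have "\<dots> = 1" by (simp add: R.emeasure_space_1)
  finally show ?thesis .
qed

end


lemma Ej_bound:
  assumes j: "1 \<le> j" "j \<le> n"
  shows "(\<integral>\<^sup>+ \<omega>. ennreal (fij n 1 j \<omega>) \<partial>MM n) \<le> ennreal ((3 * real j + 1) / real n)"
proof -
  obtain k where k: "j = Suc k" using j by (cases j) auto
  have n1: "n \<ge> 1" using j by simp
  let ?E = "\<integral>\<^sup>+ \<omega>. ennreal (fij n 1 j \<omega>) \<partial>MM n"
  let ?A = "\<lambda>\<omega>. inner_n n (col (matw \<omega>) j) (col (matw \<omega>) j)"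
  let ?c = "\<lambda>l \<omega>. inner_n n (col (matw \<omega>) j) (gam n (matw \<omega>) l)"
  have fnn: "\<And>i \<omega>. 0 \<le> fij n i j \<omega>" by (simp add: fij_def)
  have "ennreal (real n) * ?E = (\<Sum>i\<in>{1..n}. ?E)" by (simp add: ennreal_of_nat_eq_real_of_nat)
  also have "\<dots> = (\<Sum>i\<in>{1..n}. \<integral>\<^sup>+ \<omega>. ennreal (fij n i j \<omega>) \<partial>MM n)"
    using j by (intro sum.cong refl sym_fij[symmetric]) auto
  also have "\<dots> = (\<integral>\<^sup>+ \<omega>. (\<Sum>i\<in>{1..n}. ennreal (fij n i j \<omega>)) \<partial>MM n)"
    using j by (intro nn_integral_sum[symmetric] meas_fij_e) auto
  also have "\<dots> = (\<integral>\<^sup>+ \<omega>. ennreal (\<Sum>i\<in>{1..n}. fij n i j \<omega>) \<partial>MM n)"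
    by (simp add: fnn)
  also have "\<dots> \<le> (\<integral>\<^sup>+ \<omega>. ennreal (2 / real n) * ennreal ((real n - ?A \<omega>)^2)
      + ennreal 3 * (\<Sum>l=1..k. ennreal ((?c l \<omega>)^2)) \<partial>MM n)"
  proof (intro nn_integral_mono)
    fix \<omega>
    have "(\<Sum>i\<in>{1..n}. fij n i j \<omega>) \<le> 2 * (real n - ?A \<omega>)^2 / real n + 3 * (\<Sum>l=1..k. (?c l \<omega>)^2)"
      using det_bound[OF n1, of "matw \<omega>" k] unfolding fij_def k by (simp add: matw_def)
    then have "ennreal (\<Sum>i\<in>{1..n}. fij n i j \<omega>) \<le> ennreal (2 * (real n - ?A \<omega>)^2 / real n + 3 * (\<Sum>l=1..k. (?c l \<omega>)^2))"
      by (rule ennreal_leI)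
    also have "\<dots> = ennreal (2 / real n) * ennreal ((real n - ?A \<omega>)^2)
      + ennreal 3 * (\<Sum>l=1..k. ennreal ((?c l \<omega>)^2))"
    proof -
      have e1: "2 * (real n - ?A \<omega>)^2 / real n = 2 / real n * (real n - ?A \<omega>)^2" by simp
      have "ennreal (2 * (real n - ?A \<omega>)^2 / real n + 3 * (\<Sum>l=1..k. (?c l \<omega>)^2))
          = ennreal (2 * (real n - ?A \<omega>)^2 / real n) + ennreal (3 * (\<Sum>l=1..k. (?c l \<omega>)^2))"
        by (rule ennreal_plus) (auto intro: sum_nonneg)
      also have "ennreal (2 * (real n - ?A \<omega>)^2 / real n) = ennreal (2 / real n) * ennreal ((real n - ?A \<omega>)^2)"
        unfolding e1 by (rule ennreal_mult) auto
      also have "ennreal (3 * (\<Sum>l=1..k. (?c l \<omega>)^2)) = ennreal 3 * ennreal (\<Sum>l=1..k. (?c l \<omega>)^2)"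
        by (rule ennreal_mult) (auto intro: sum_nonneg)
      also have "ennreal (\<Sum>l=1..k. (?c l \<omega>)^2) = (\<Sum>l=1..k. ennreal ((?c l \<omega>)^2))"
        by (rule sum_ennreal[symmetric]) auto
      finally show ?thesis .
    qed
    finally show "ennreal (\<Sum>i\<in>{1..n}. fij n i j \<omega>) \<le> \<dots>" .
  qed
  also have "\<dots> = ennreal (2 / real n) * (\<integral>\<^sup>+ \<omega>. ennreal ((real n - ?A \<omega>)^2) \<partial>MM n)
      + ennreal 3 * (\<Sum>l=1..k. \<integral>\<^sup>+ \<omega>. ennreal ((?c l \<omega>)^2) \<partial>MM n)"
  proof -
    have m1: "(\<lambda>\<omega>. ennreal ((real n - ?A \<omega>)^2)) \<in> borel_measurable (MM n)" by (rule meas_inner_cc)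
    have m2: "(\<lambda>\<omega>. ennreal ((?c l \<omega>)^2)) \<in> borel_measurable (MM n)" if "l \<in> {1..k}" for l
      using that by (intro meas_inner_cg) auto
    have m3: "(\<lambda>\<omega>. \<Sum>l=1..k. ennreal ((?c l \<omega>)^2)) \<in> borel_measurable (MM n)"
      using m2 by (rule borel_measurable_sum)
    have "(\<integral>\<^sup>+ \<omega>. ennreal (2 / real n) * ennreal ((real n - ?A \<omega>)^2)
      + ennreal 3 * (\<Sum>l=1..k. ennreal ((?c l \<omega>)^2)) \<partial>MM n)
      = (\<integral>\<^sup>+ \<omega>. ennreal (2 / real n) * ennreal ((real n - ?A \<omega>)^2) \<partial>MM n)
      + (\<integral>\<^sup>+ \<omega>. ennreal 3 * (\<Sum>l=1..k. ennreal ((?c l \<omega>)^2)) \<partial>MM n)"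
      by (rule nn_integral_add) (use m1 m3 in \<open>auto intro: borel_measurable_times_ennreal\<close>)
    also have "(\<integral>\<^sup>+ \<omega>. ennreal (2 / real n) * ennreal ((real n - ?A \<omega>)^2) \<partial>MM n)
       = ennreal (2 / real n) * (\<integral>\<^sup>+ \<omega>. ennreal ((real n - ?A \<omega>)^2) \<partial>MM n)"
      by (rule nn_integral_cmult[OF m1])
    also have "(\<integral>\<^sup>+ \<omega>. ennreal 3 * (\<Sum>l=1..k. ennreal ((?c l \<omega>)^2)) \<partial>MM n)
       = ennreal 3 * (\<integral>\<^sup>+ \<omega>. (\<Sum>l=1..k. ennreal ((?c l \<omega>)^2)) \<partial>MM n)"
      by (rule nn_integral_cmult[OF m3])
    also have "(\<integral>\<^sup>+ \<omega>. (\<Sum>l=1..k. ennreal ((?c l \<omega>)^2)) \<partial>MM n) = (\<Sum>l=1..k. \<integral>\<^sup>+ \<omega>. ennreal ((?c l \<omega>)^2) \<partial>MM n)"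
      by (rule nn_integral_sum) (rule m2)
    finally show ?thesis .
  qed
  also have "\<dots> \<le> ennreal (2 / real n) * ennreal (2 * real n) + ennreal 3 * (\<Sum>l=1..k. 1)"
  proof -
    have "(\<Sum>l=1..k. \<integral>\<^sup>+ \<omega>. ennreal ((?c l \<omega>)^2) \<partial>MM n) \<le> (\<Sum>l=1..k. 1)"
      using j k by (intro sum_mono I1) auto
    then show ?thesis using I2[OF j] by (intro add_mono mult_left_mono) auto
  qed
  also have "\<dots> = ennreal (3 * real j + 1)"
  proof -
    have h: "4 + 3 * ennreal (real k) = ennreal (4 + 3 * real k)"
      by (subst ennreal_plus) (auto simp: ennreal_mult)
    show ?thesis
      using n1 k h by (simp add: ennreal_mult[symmetric] ennreal_of_nat_eq_real_of_nat algebra_simps)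
  qed
  finally have nE: "ennreal (real n) * ?E \<le> ennreal (3 * real j + 1)" .
  have "?E = ennreal (1 / real n) * (ennreal (real n) * ?E)"
    using n1 by (simp add: mult.assoc[symmetric] ennreal_mult[symmetric])
  also have "\<dots> \<le> ennreal (1 / real n) * ennreal (3 * real j + 1)"
    by (intro mult_left_mono nE) auto
  also have "\<dots> = ennreal ((3 * real j + 1) / real n)"
    by (subst ennreal_mult[symmetric]) auto
  finally show ?thesis .
qed

lemma real_final:
  assumes "n \<ge> 2" "q \<ge> 1"
  shows "(\<Sum>i=1..p. \<Sum>j=1..q. (3 * real j + 1) / real n) \<le> 24 * real p * (real q)^2 / real n"
proof -
  have "(\<Sum>i=1..p. \<Sum>j=1..q. (3 * real j + 1) / real n) \<le> (\<Sum>i=1..p. \<Sum>j=1..q. 4 * real q / real n)"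
    using assms by (intro sum_mono divide_right_mono) auto
  also have "\<dots> = real p * (real q * (4 * real q / real n))" by simp
  also have "\<dots> \<le> 24 * real p * (real q)^2 / real n"
    using assms by (simp add: power2_eq_square field_simps)
  finally show ?thesis .
qed

theorem proposition3p5:
  fixes n p q :: nat
  assumes "n \<ge> 2" and "1 \<le> p" and "p \<le> n" and "1 \<le> q" and "q \<le> n"
  shows "(\<integral>\<^sup>+ \<omega>. ennreal (\<Sum>i=1..p. \<Sum>j=1..q.
              (sqrt (real n) * gs_gamma n (\<lambda>i j. \<omega> (i, j)) i j - \<omega> (i, j))\<^sup>2)
            \<partial>gauss_matrix_space n)
         \<le> ennreal (24 * real p * (real q)\<^sup>2 / real n)"
proof -
  have pt: "\<And>\<omega>. (\<Sum>i=1..p. \<Sum>j=1..q. (sqrt (real n) * gs_gamma n (\<lambda>i j. \<omega> (i, j)) i j - \<omega> (i, j))\<^sup>2)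
     = (\<Sum>i=1..p. \<Sum>j=1..q. fij n i j \<omega>)"
    by (simp add: fij_def gs_gamma_gam matw_def)
  have fnn: "\<And>i j \<omega>. 0 \<le> fij n i j \<omega>" by (simp add: fij_def)
  have "(\<integral>\<^sup>+ \<omega>. ennreal (\<Sum>i=1..p. \<Sum>j=1..q.
              (sqrt (real n) * gs_gamma n (\<lambda>i j. \<omega> (i, j)) i j - \<omega> (i, j))\<^sup>2)
            \<partial>gauss_matrix_space n) = (\<integral>\<^sup>+ \<omega>. ennreal (\<Sum>i=1..p. \<Sum>j=1..q. fij n i j \<omega>) \<partial>MM n)"
    by (simp only: pt gms)
  also have "\<dots> = (\<integral>\<^sup>+ \<omega>. (\<Sum>i=1..p. \<Sum>j=1..q. ennreal (fij n i j \<omega>)) \<partial>MM n)"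
    by (intro nn_integral_cong) (simp add: fnn sum_nonneg)
  also have "\<dots> = (\<Sum>i=1..p. \<integral>\<^sup>+ \<omega>. (\<Sum>j=1..q. ennreal (fij n i j \<omega>)) \<partial>MM n)"
    by (intro nn_integral_sum borel_measurable_sum meas_fij_e) auto
  also have "\<dots> = (\<Sum>i=1..p. \<Sum>j=1..q. \<integral>\<^sup>+ \<omega>. ennreal (fij n i j \<omega>) \<partial>MM n)"
    by (intro sum.cong refl nn_integral_sum meas_fij_e) auto
  also have "\<dots> \<le> (\<Sum>i=1..p. \<Sum>j=1..q. ennreal ((3 * real j + 1) / real n))"
  proof (intro sum_mono)
    fix i j assume i: "i \<in> {1..p}" and j: "j \<in> {1..q}"
    have "(\<integral>\<^sup>+ \<omega>. ennreal (fij n i j \<omega>) \<partial>MM n) = (\<integral>\<^sup>+ \<omega>. ennreal (fij n 1 j \<omega>) \<partial>MM n)"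
      using i j assms by (intro sym_fij) auto
    also have "\<dots> \<le> ennreal ((3 * real j + 1) / real n)"
      using j assms by (intro Ej_bound) auto
    finally show "(\<integral>\<^sup>+ \<omega>. ennreal (fij n i j \<omega>) \<partial>MM n) \<le> ennreal ((3 * real j + 1) / real n)" .
  qed
  also have "\<dots> = ennreal (\<Sum>i=1..p. \<Sum>j=1..q. (3 * real j + 1) / real n)"
  proof -
    have a: "(\<Sum>j=1..q. ennreal ((3 * real j + 1) / real n)) = ennreal (\<Sum>j=1..q. (3 * real j + 1) / real n)"
      by (rule sum_ennreal) auto
    have b: "(\<Sum>i=1..p. ennreal (\<Sum>j=1..q. (3 * real j + 1) / real n)) = ennreal (\<Sum>i=1..p. \<Sum>j=1..q. (3 * real j + 1) / real n)"
      by (rule sum_ennreal) (auto intro: sum_nonneg)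
    show ?thesis by (simp only: a b)
  qed
  also have "\<dots> \<le> ennreal (24 * real p * (real q)\<^sup>2 / real n)"
    using assms by (intro ennreal_leI real_final) auto
  finally show ?thesis .
qed


end
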